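(* The line graph of the Petersen graph is vertex-transitive but not uniformly vertex-transitive.
   Context: The Petersen graph has as vertices the $2$-element subsets of $\{1,2,3,4,5\}$, adjacent iff disjoint. The line graph $L(\Gamma)$ has vertex set $E(\Gamma)$, two edges adjacent iff they share an endpoint. A permutation $\sigma$ of the vertex set is identified with its permutation matrix (the $(u,v)$ entry is $1$ iff $\sigma(u)=v$); $J_n$ is the $n\times n$ all-ones matrix. A graph on $n$ vertices is uniformly vertex-transitive if there is a set of $n$ distinct automorphisms $\{\sigma_1,\ldots,\sigma_n\}$ with $\sum_i\sigma_i=J_n$. *)

theory Defs
  imports Main
begin

definition petersen_vertices :: "nat set set" where
  "petersen_vertices = {A. A \<subseteq> {1..5} \<and> card A = 2}"

definition petersen_adj :: "nat set \<Rightarrow> nat set \<Rightarrow> bool" where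
  "petersen_adj A B \<longleftrightarrow> A \<in> petersen_vertices \<and> B \<in> petersen_vertices \<and> A \<inter> B = {}"

definition graph_edges :: "'a set \<Rightarrow> ('a \<Rightarrow> 'a \<Rightarrow> bool) \<Rightarrow> 'a set set" where
  "graph_edges V adj = {{u, v} | u v. u \<in> V \<and> v \<in> V \<and> adj u v}"

definition line_graph_adj :: "'a set \<Rightarrow> ('a \<Rightarrow> 'a \<Rightarrow> bool) \<Rightarrow> 'a set \<Rightarrow> 'a set \<Rightarrow> bool" where
  "line_graph_adj V adj e f \<longleftrightarrow> e \<in> graph_edges V adj \<and> f \<in> graph_edges V adj \<and> e \<noteq> f \<and> e \<inter> f \<noteq> {}"

definition graph_aut :: "'a set \<Rightarrow> ('a \<Rightarrow> 'a \<Rightarrow> bool) \<Rightarrow> ('a \<Rightarrow> 'a) \<Rightarrow> bool" where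
  "graph_aut V adj \<sigma> \<longleftrightarrow> bij_betw \<sigma> V V \<and> (\<forall>x. x \<notin> V \<longrightarrow> \<sigma> x = x)
     \<and> (\<forall>u\<in>V. \<forall>v\<in>V. adj (\<sigma> u) (\<sigma> v) \<longleftrightarrow> adj u v)"

definition vertex_transitive :: "'a set \<Rightarrow> ('a \<Rightarrow> 'a \<Rightarrow> bool) \<Rightarrow> bool" where
  "vertex_transitive V adj \<longleftrightarrow> (\<forall>u\<in>V. \<forall>v\<in>V. \<exists>\<sigma>. graph_aut V adj \<sigma> \<and> \<sigma> u = v)"

text \<open>Uniformly vertex-transitive: n = |V| distinct automorphisms whose permutation matrices
  (entry (u,v) is 1 iff sigma u = v) sum to the all-ones matrix J_n.\<close>
definition uniformly_vertex_transitive :: "'a set \<Rightarrow> ('a \<Rightarrow> 'a \<Rightarrow> bool) \<Rightarrow> bool" where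
  "uniformly_vertex_transitive V adj \<longleftrightarrow>
     (\<exists>S. finite S \<and> card S = card V \<and> (\<forall>\<sigma>\<in>S. graph_aut V adj \<sigma>) \<and>
        (\<forall>u\<in>V. \<forall>v\<in>V. (\<Sum>\<sigma>\<in>S. (if \<sigma> u = v then 1 else 0)) = (1::nat)))"

definition petersen_line_vertices :: "nat set set set" where
  "petersen_line_vertices = graph_edges petersen_vertices petersen_adj"

definition petersen_line_adj :: "nat set set \<Rightarrow> nat set set \<Rightarrow> bool" where
  "petersen_line_adj = line_graph_adj petersen_vertices petersen_adj"

end

theory Submission
  imports Defs
begin


abbreviation "PVL \<equiv> {{1,2},{1,3},{1,4},{1,5},{2,3},{2,4},{2,5},{3,4},{3,5},{4,5}} :: nat set set"
abbreviation "LVL \<equiv> {{{1,2},{3,4}},{{1,2},{3,5}},{{1,2},{4,5}},{{1,3},{2,4}},{{1,3},{2,5}},{{1,3},{4,5}},{{1,4},{2,3}},{{1,4},{2,5}},{{1,4},{3,5}},{{1,5},{2,3}},{{1,5},{2,4}},{{1,5},{3,4}},{{2,3},{4,5}},{{2,4},{3,5}},{{2,5},{3,4}}} :: nat set set set"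

lemma PV: "petersen_vertices = PVL"
proof -
  have h: "A \<subseteq> {1..5} \<and> card A = 2 \<longleftrightarrow> A \<in> PVL" for A :: "nat set"
  proof
    assume h: "A \<subseteq> {1..5} \<and> card A = 2"
    then obtain x y where A: "A = {x,y}" "x \<noteq> y" by (auto simp: card_2_iff)
    with h have "x \<in> {1..5}" "y \<in> {1..5}" by auto
    hence "x \<in> {1,2,3,4,5}" "y \<in> {1,2,3,4,5}" by auto
    thus "A \<in> PVL" using A
      by (elim insertE emptyE; simp add: doubleton_eq_iff)
  next
    assume "A \<in> PVL"
    thus "A \<subseteq> {1..5} \<and> card A = 2" by auto
  qed
  show ?thesis unfolding petersen_vertices_def by (rule set_eqI, subst mem_Collect_eq, rule h)
qed

lemma LV_char: "e \<in> petersen_line_vertices \<longleftrightarrow> (\<exists>A B. e = {A,B} \<and> A \<in> petersen_vertices \<and> B \<in> petersen_vertices \<and> A \<inter> B = {})"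
  unfolding petersen_line_vertices_def graph_edges_def petersen_adj_def by blast

lemma LV_intro0: "A \<in> petersen_vertices \<Longrightarrow> B \<in> petersen_vertices \<Longrightarrow> A \<inter> B = {} \<Longrightarrow> {A,B} \<in> petersen_line_vertices"
  unfolding LV_char by blast
lemmas LV_intro = LV_intro0[unfolded PV]

lemma LV: "petersen_line_vertices = LVL"
proof (rule set_eqI)
  fix e
  show "e \<in> petersen_line_vertices \<longleftrightarrow> e \<in> LVL"
  proof
    assume "e \<in> petersen_line_vertices"
    then obtain A B where e: "e = {A,B}" "A \<in> petersen_vertices" "B \<in> petersen_vertices" "A \<inter> B = {}" unfolding LV_char by blast
    note e = e[unfolded PV]
    from e(2,3,4) show "e \<in> LVL" unfolding e(1)
      by (elim insertE emptyE; simp add: doubleton_eq_iff)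
  next
    assume h: "e \<in> LVL"
    have all: "\<forall>e\<in>LVL. e \<in> petersen_line_vertices"
      unfolding ball_simps by (intro conjI TrueI; rule LV_intro; simp)
    from all h show "e \<in> petersen_line_vertices" by (rule bspec)
  qed
qed

lemma finite_LV: "finite petersen_line_vertices" by (simp add: LV)

lemma ladj: "petersen_line_adj e f \<longleftrightarrow> e \<in> petersen_line_vertices \<and> f \<in> petersen_line_vertices \<and> e \<noteq> f \<and> e \<inter> f \<noteq> {}"
  unfolding petersen_line_adj_def line_graph_adj_def petersen_line_vertices_def by simp

lemma PVs: "A \<in> petersen_vertices \<Longrightarrow> A \<subseteq> {1..5}" by (simp add: petersen_vertices_def)

lemma LVs: "e \<in> petersen_line_vertices \<Longrightarrow> e \<subseteq> petersen_vertices" unfolding LV_char by auto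

definition lift :: "(nat \<Rightarrow> nat) \<Rightarrow> nat set set \<Rightarrow> nat set set" where
  "lift \<pi> e = (if e \<in> petersen_line_vertices then image (image \<pi>) e else e)"

lemma lift_aut:
  assumes inj: "inj_on \<pi> {1..5}" and surj: "\<pi> ` {1..5} = {1..5}"
  shows "graph_aut petersen_line_vertices petersen_line_adj (lift \<pi>)"
proof -
  let ?g = "image \<pi>"
  have gPV: "?g A \<in> petersen_vertices" if "A \<in> petersen_vertices" for A
  proof -
    from that have A: "A \<subseteq> {1..5}" "card A = 2" by (auto simp: petersen_vertices_def)
    have "card (\<pi> ` A) = card A" using inj_on_subset[OF inj A(1)] by (rule card_image)
    moreover have "\<pi> ` A \<subseteq> {1..5}" using A(1) surj by blast
    ultimately show ?thesis using A by (simp add: petersen_vertices_def)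
  qed
  have ginj: "inj_on ?g petersen_vertices"
    by (rule inj_on_image, rule inj_on_subset[OF inj]) (auto simp: petersen_vertices_def)
  have gdisj: "?g A \<inter> ?g B = {} \<longleftrightarrow> A \<inter> B = {}" if "A \<in> petersen_vertices" "B \<in> petersen_vertices" for A B
    using inj_on_image_Int[OF inj PVs[OF that(1)] PVs[OF that(2)]] by auto
  have gLV: "?g ` e \<in> petersen_line_vertices" if "e \<in> petersen_line_vertices" for e
  proof -
    from that obtain A B where e: "e = {A,B}" "A \<in> petersen_vertices" "B \<in> petersen_vertices" "A \<inter> B = {}"
      unfolding LV_char by blast
    have "{?g A, ?g B} \<in> petersen_line_vertices"
      by (rule LV_intro0) (use e gPV gdisj in auto)
    thus ?thesis using e(1) by simp
  qed
  have liftinj: "inj_on (lift \<pi>) petersen_line_vertices"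
  proof (rule inj_onI)
    fix e f assume ef: "e \<in> petersen_line_vertices" "f \<in> petersen_line_vertices" "lift \<pi> e = lift \<pi> f"
    hence "?g ` e = ?g ` f" by (simp add: lift_def)
    thus "e = f" using inj_on_image_eq_iff[OF ginj LVs[OF ef(1)] LVs[OF ef(2)]] by blast
  qed
  have liftLV: "lift \<pi> ` petersen_line_vertices \<subseteq> petersen_line_vertices" using gLV by (auto simp: lift_def)
  have bij: "bij_betw (lift \<pi>) petersen_line_vertices petersen_line_vertices"
    unfolding bij_betw_def using liftinj card_subset_eq[OF finite_LV liftLV] card_image[OF liftinj] by auto
  have adj: "petersen_line_adj (lift \<pi> u) (lift \<pi> v) \<longleftrightarrow> petersen_line_adj u v"
    if uv: "u \<in> petersen_line_vertices" "v \<in> petersen_line_vertices" for u v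
  proof -
    have "lift \<pi> u \<inter> lift \<pi> v = ?g ` (u \<inter> v)"
      using inj_on_image_Int[OF ginj LVs[OF uv(1)] LVs[OF uv(2)]] uv by (simp add: lift_def)
    moreover have "lift \<pi> u = lift \<pi> v \<longleftrightarrow> u = v" using liftinj uv by (auto dest: inj_onD)
    moreover have "lift \<pi> u \<in> petersen_line_vertices" "lift \<pi> v \<in> petersen_line_vertices" using liftLV uv by auto
    ultimately show ?thesis using uv unfolding ladj by auto
  qed
  show ?thesis unfolding graph_aut_def using bij adj by (auto simp: lift_def)
qed

lemma aut_comp: "graph_aut V adj \<sigma> \<Longrightarrow> graph_aut V adj \<tau> \<Longrightarrow> graph_aut V adj (\<sigma> \<circ> \<tau>)"
proof -
  assume s: "graph_aut V adj \<sigma>" and t: "graph_aut V adj \<tau>"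
  have b: "bij_betw (\<sigma> \<circ> \<tau>) V V" using s t unfolding graph_aut_def by (meson bij_betw_trans)
  have o: "\<forall>x. x \<notin> V \<longrightarrow> (\<sigma> \<circ> \<tau>) x = x" using s t unfolding graph_aut_def by simp
  have a: "adj ((\<sigma> \<circ> \<tau>) u) ((\<sigma> \<circ> \<tau>) v) \<longleftrightarrow> adj u v" if "u \<in> V" "v \<in> V" for u v
  proof -
    have "\<tau> u \<in> V" "\<tau> v \<in> V" using t that unfolding graph_aut_def by (meson bij_betwE)+
    thus ?thesis using s t that unfolding graph_aut_def by simp
  qed
  show ?thesis unfolding graph_aut_def using b o a by blast
qed

definition pm :: "nat \<Rightarrow> nat \<Rightarrow> nat \<Rightarrow> nat \<Rightarrow> nat \<Rightarrow> nat \<Rightarrow> nat" where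
  "pm a b c d e x = (if x = 1 then a else if x = 2 then b else if x = 3 then c else if x = 4 then d else if x = 5 then e else x)"

lemma five: "{1..5::nat} = {1,2,3,4,5}" by auto

lemma VT_key: "\<forall>u\<in>petersen_line_vertices. \<exists>\<pi> \<rho>. (inj_on \<pi> {1..5} \<and> \<pi> ` {1..5} = {1..5}) \<and> (inj_on \<rho> {1..5} \<and> \<rho> ` {1..5} = {1..5})
   \<and> lift \<pi> {{1,2},{3,4}} = u \<and> lift \<rho> u = {{1,2},{3,4}}"
  unfolding LV ball_simps five
  apply (intro conjI TrueI)
    subgoal by (rule exI[of _ "pm 1 2 3 4 5"], rule exI[of _ "pm 1 2 3 4 5"], simp add: pm_def lift_def LV five doubleton_eq_iff, (auto)?)
    subgoal by (rule exI[of _ "pm 1 2 3 5 4"], rule exI[of _ "pm 1 2 3 5 4"], simp add: pm_def lift_def LV five doubleton_eq_iff, (auto)?)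
    subgoal by (rule exI[of _ "pm 1 2 4 5 3"], rule exI[of _ "pm 1 2 5 3 4"], simp add: pm_def lift_def LV five doubleton_eq_iff, (auto)?)
    subgoal by (rule exI[of _ "pm 1 3 2 4 5"], rule exI[of _ "pm 1 3 2 4 5"], simp add: pm_def lift_def LV five doubleton_eq_iff, (auto)?)
    subgoal by (rule exI[of _ "pm 1 3 2 5 4"], rule exI[of _ "pm 1 3 2 5 4"], simp add: pm_def lift_def LV five doubleton_eq_iff, (auto)?)
    subgoal by (rule exI[of _ "pm 1 3 4 5 2"], rule exI[of _ "pm 1 5 2 3 4"], simp add: pm_def lift_def LV five doubleton_eq_iff, (auto)?)
    subgoal by (rule exI[of _ "pm 1 4 2 3 5"], rule exI[of _ "pm 1 3 4 2 5"], simp add: pm_def lift_def LV five doubleton_eq_iff, (auto)?)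
    subgoal by (rule exI[of _ "pm 1 4 2 5 3"], rule exI[of _ "pm 1 3 5 2 4"], simp add: pm_def lift_def LV five doubleton_eq_iff, (auto)?)
    subgoal by (rule exI[of _ "pm 1 4 3 5 2"], rule exI[of _ "pm 1 5 3 2 4"], simp add: pm_def lift_def LV five doubleton_eq_iff, (auto)?)
    subgoal by (rule exI[of _ "pm 1 5 2 3 4"], rule exI[of _ "pm 1 3 4 5 2"], simp add: pm_def lift_def LV five doubleton_eq_iff, (auto)?)
    subgoal by (rule exI[of _ "pm 1 5 2 4 3"], rule exI[of _ "pm 1 3 5 4 2"], simp add: pm_def lift_def LV five doubleton_eq_iff, (auto)?)
    subgoal by (rule exI[of _ "pm 1 5 3 4 2"], rule exI[of _ "pm 1 5 3 4 2"], simp add: pm_def lift_def LV five doubleton_eq_iff, (auto)?)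
    subgoal by (rule exI[of _ "pm 2 3 4 5 1"], rule exI[of _ "pm 5 1 2 3 4"], simp add: pm_def lift_def LV five doubleton_eq_iff, (auto)?)
    subgoal by (rule exI[of _ "pm 2 4 3 5 1"], rule exI[of _ "pm 5 1 3 2 4"], simp add: pm_def lift_def LV five doubleton_eq_iff, (auto)?)
    subgoal by (rule exI[of _ "pm 2 5 3 4 1"], rule exI[of _ "pm 5 1 3 4 2"], simp add: pm_def lift_def LV five doubleton_eq_iff, (auto)?)
  done

lemma VT: "vertex_transitive petersen_line_vertices petersen_line_adj"
  unfolding vertex_transitive_def
proof (intro ballI)
  fix u v assume u: "u \<in> petersen_line_vertices" and v: "v \<in> petersen_line_vertices"
  obtain \<pi>1 \<rho> where Hu: "(inj_on \<pi>1 {1..5} \<and> \<pi>1 ` {1..5} = {1..5}) \<and> (inj_on \<rho> {1..5} \<and> \<rho> ` {1..5} = {1..5})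
   \<and> lift \<pi>1 {{1,2},{3,4}} = u \<and> lift \<rho> u = {{1,2},{3,4}}"
    by (insert bspec[OF VT_key u], elim exE, erule that)
  obtain \<pi> \<rho>1 where Hv: "(inj_on \<pi> {1..5} \<and> \<pi> ` {1..5} = {1..5}) \<and> (inj_on \<rho>1 {1..5} \<and> \<rho>1 ` {1..5} = {1..5})
   \<and> lift \<pi> {{1,2},{3,4}} = v \<and> lift \<rho>1 v = {{1,2},{3,4}}"
    by (insert bspec[OF VT_key v], elim exE, erule that)
  have r: "inj_on \<rho> {1..5}" "\<rho> ` {1..5} = {1..5}" "lift \<rho> u = {{1,2},{3,4}}" using Hu by simp_all
  have p: "inj_on \<pi> {1..5}" "\<pi> ` {1..5} = {1..5}" "lift \<pi> {{1,2},{3,4}} = v" using Hv by simp_all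
  show "\<exists>\<sigma>. graph_aut petersen_line_vertices petersen_line_adj \<sigma> \<and> \<sigma> u = v"
  proof (rule exI[of _ "lift \<pi> \<circ> lift \<rho>"], rule conjI)
    show "graph_aut petersen_line_vertices petersen_line_adj (lift \<pi> \<circ> lift \<rho>)"
      by (rule aut_comp[OF lift_aut[OF p(1,2)] lift_aut[OF r(1,2)]])
    show "(lift \<pi> \<circ> lift \<rho>) u = v" by (simp only: o_apply r(3) p(3))
  qed
qed



definition T :: "nat set \<Rightarrow> nat set set set" where "T c = {e \<in> petersen_line_vertices. c \<in> e}"

lemma T_sub: "T c \<subseteq> petersen_line_vertices" by (auto simp: T_def)
lemma finite_T: "finite (T c)" using T_sub finite_LV by (rule finite_subset)

lemma LV_pair: assumes "e \<in> petersen_line_vertices" "c \<in> e"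
  shows "\<exists>p. e = {c,p} \<and> c \<in> petersen_vertices \<and> p \<in> petersen_vertices \<and> c \<inter> p = {}"
proof -
  from assms(1) obtain A B where e: "e = {A,B}" "A \<in> petersen_vertices" "B \<in> petersen_vertices" "A \<inter> B = {}"
    unfolding LV_char by blast
  show ?thesis
  proof (cases "c = A")
    case True thus ?thesis using e by blast
  next
    case False
    hence "c = B" using assms(2) e(1) by blast
    thus ?thesis using e by (intro exI[of _ A]) auto
  qed
qed

lemma PV_ne: "c \<in> petersen_vertices \<Longrightarrow> c \<noteq> {}" by (auto simp: petersen_vertices_def)

lemma T_Int: assumes c: "c \<in> petersen_vertices" and b: "b \<in> petersen_vertices" and cb: "c \<noteq> b"
  shows "T c \<inter> T b = (if c \<inter> b = {} then {{c,b}} else {})"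
proof (rule set_eqI)
  fix e
  show "e \<in> T c \<inter> T b \<longleftrightarrow> e \<in> (if c \<inter> b = {} then {{c,b}} else {})"
  proof
    assume "e \<in> T c \<inter> T b"
    hence e: "e \<in> petersen_line_vertices" "c \<in> e" "b \<in> e" by (auto simp: T_def)
    from LV_pair[OF e(1,2)] obtain p where p: "e = {c,p}" "c \<inter> p = {}" by blast
    with e(3) cb have "b = p" by blast
    thus "e \<in> (if c \<inter> b = {} then {{c,b}} else {})" using p by simp
  next
    assume h: "e \<in> (if c \<inter> b = {} then {{c,b}} else {})"
    hence d: "c \<inter> b = {}" and e: "e = {c,b}" by (auto split: if_splits)
    have "e \<in> petersen_line_vertices" unfolding e by (rule LV_intro0[OF c b d])
    thus "e \<in> T c \<inter> T b" using e by (auto simp: T_def)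
  qed
qed

lemma T_card: assumes "c \<in> petersen_vertices" shows "card (T c) = 3"
proof -
  have h: "card (T c) = (\<Sum>e\<in>petersen_line_vertices. if c \<in> e then 1 else 0)"
    unfolding T_def card_eq_sum sum.inter_filter[OF finite_LV] ..
  have all: "\<forall>c\<in>petersen_vertices. (\<Sum>e\<in>petersen_line_vertices. if c \<in> e then 1 else 0) = (3::nat)"
    unfolding PV LV by (simp add: doubleton_eq_iff)
  show ?thesis using bspec[OF all assms] h by simp
qed

definition kk :: "nat set \<Rightarrow> nat set \<Rightarrow> nat" where
  "kk c b = (if c = b then 3 else if c \<inter> b = {} then 1 else 0)"

lemma card_TT: assumes "c \<in> petersen_vertices" "b \<in> petersen_vertices"
  shows "card (T c \<inter> T b) = kk c b"
proof (cases "c = b")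
  case True thus ?thesis using T_card[OF assms(1)] by (simp add: kk_def)
next
  case False
  have "c \<noteq> {}" using PV_ne assms(1) by blast
  hence "{c,b} \<noteq> {}" by simp
  thus ?thesis using T_Int[OF assms False] False by (simp add: kk_def)
qed

lemma T_inj: assumes "c \<in> petersen_vertices" "d \<in> petersen_vertices" "T c = T d" shows "c = d"
proof (rule ccontr)
  assume "c \<noteq> d"
  have "card (T c \<inter> T d) = kk c d" by (rule card_TT[OF assms(1,2)])
  moreover have "kk c d \<le> 1" using \<open>c \<noteq> d\<close> by (simp add: kk_def)
  moreover have "card (T c \<inter> T d) = 3" using assms(3) T_card[OF assms(1)] by simp
  ultimately show False by simp
qed

lemma no_triangle: assumes "c \<in> petersen_vertices" "p \<in> petersen_vertices" "q \<in> petersen_vertices"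
  "c \<inter> p = {}" "c \<inter> q = {}" "p \<inter> q = {}" shows False
proof -
  have cs: "card c = 2" "card p = 2" "card q = 2" "c \<subseteq> {1..5}" "p \<subseteq> {1..5}" "q \<subseteq> {1..5}"
    using assms(1-3) by (auto simp: petersen_vertices_def)
  hence f: "finite c" "finite p" "finite q" by (auto intro: finite_subset)
  have "card (c \<union> p) = 4" using card_Un_disjoint[OF f(1,2) assms(4)] cs by simp
  moreover have "(c \<union> p) \<inter> q = {}" using assms(5,6) by blast
  ultimately have "card (c \<union> p \<union> q) = 6" using card_Un_disjoint[of "c \<union> p" q] f cs by simp
  moreover have "card (c \<union> p \<union> q) \<le> card {1..5::nat}" by (rule card_mono) (use cs in auto)
  ultimately show False by simp
qed

lemma clique:
  assumes xyz: "x \<in> petersen_line_vertices" "y \<in> petersen_line_vertices" "z \<in> petersen_line_vertices"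
    and d: "x \<noteq> y" "y \<noteq> z" "x \<noteq> z" and i: "x \<inter> y \<noteq> {}" "y \<inter> z \<noteq> {}" "x \<inter> z \<noteq> {}"
  shows "\<exists>c\<in>petersen_vertices. {x,y,z} = T c"
proof -
  from i(1) obtain c where c: "c \<in> x" "c \<in> y" by blast
  from LV_pair[OF xyz(1) c(1)] obtain p where p: "x = {c,p}" "c \<in> petersen_vertices" "p \<in> petersen_vertices" "c \<inter> p = {}" by blast
  from LV_pair[OF xyz(2) c(2)] obtain q where q: "y = {c,q}" "q \<in> petersen_vertices" "c \<inter> q = {}" by blast
  show ?thesis
  proof (cases "c \<in> z")
    case True
    have sub: "{x,y,z} \<subseteq> T c" using xyz c True by (auto simp: T_def)
    have "card {x,y,z} = 3" using d by simp
    hence "{x,y,z} = T c" using card_subset_eq[OF finite_T sub] T_card[OF p(2)] by simp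
    thus ?thesis using p(2) by blast
  next
    case False
    have pq: "p \<noteq> q" using d(1) p(1) q(1) by blast
    from i(3) False p(1) have pz: "p \<in> z" by blast
    from i(2) False q(1) have qz: "q \<in> z" by blast
    from LV_pair[OF xyz(3) pz] obtain r where r: "z = {p,r}" "p \<inter> r = {}" by blast
    have "q = r" using qz r(1) pq by blast
    hence "p \<inter> q = {}" using r(2) by simp
    hence False using no_triangle[OF p(2,3) q(2) p(4) q(3)] by blast
    thus ?thesis ..
  qed
qed



lemma two_three: "2 * (x::nat) = 3 \<Longrightarrow> False" by presburger

lemma NU: "\<not> uniformly_vertex_transitive petersen_line_vertices petersen_line_adj"
proof
  assume "uniformly_vertex_transitive petersen_line_vertices petersen_line_adj"
  then obtain S where fS: "finite S" and aut: "\<forall>\<sigma>\<in>S. graph_aut petersen_line_vertices petersen_line_adj \<sigma>"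
    and H: "\<forall>u\<in>petersen_line_vertices. \<forall>v\<in>petersen_line_vertices. (\<Sum>\<sigma>\<in>S. (if \<sigma> u = v then 1 else 0)) = (1::nat)"
    unfolding uniformly_vertex_transitive_def by blast
  define x1 where "x1 = ({{1,2},{3,4}} :: nat set set)"
  define x2 where "x2 = ({{1,2},{3,5}} :: nat set set)"
  define x3 where "x3 = ({{1,2},{4,5}} :: nat set set)"
  define Ta where "Ta = T {1,2}"
  have a_PV: "{1,2} \<in> petersen_vertices" by (simp add: PV)
  have xLV: "x1 \<in> petersen_line_vertices" "x2 \<in> petersen_line_vertices" "x3 \<in> petersen_line_vertices"
    unfolding x1_def x2_def x3_def LV by simp_all
  have xd: "x1 \<noteq> x2" "x2 \<noteq> x3" "x1 \<noteq> x3" unfolding x1_def x2_def x3_def by (simp_all add: doubleton_eq_iff)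
  have xadj: "petersen_line_adj x1 x2" "petersen_line_adj x2 x3" "petersen_line_adj x1 x3"
    using xLV xd unfolding ladj by (simp_all add: x1_def x2_def x3_def)
  have Ta: "Ta = {x1,x2,x3}"
  proof -
    have sub: "{x1,x2,x3} \<subseteq> Ta" using xLV unfolding Ta_def T_def x1_def x2_def x3_def by simp
    have "card {x1,x2,x3} = 3" using xd by simp
    thus ?thesis using card_subset_eq[OF _ sub] finite_T T_card[OF a_PV] unfolding Ta_def by simp
  qed
  have TaLV: "Ta \<subseteq> petersen_line_vertices" unfolding Ta_def by (rule T_sub)
  have img: "\<exists>c\<in>petersen_vertices. \<sigma> ` Ta = T c" if s: "\<sigma> \<in> S" for \<sigma>
  proof -
    have g: "graph_aut petersen_line_vertices petersen_line_adj \<sigma>" using aut s by blast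
    hence bij: "bij_betw \<sigma> petersen_line_vertices petersen_line_vertices"
      and ad: "\<And>u v. u \<in> petersen_line_vertices \<Longrightarrow> v \<in> petersen_line_vertices \<Longrightarrow> petersen_line_adj (\<sigma> u) (\<sigma> v) \<longleftrightarrow> petersen_line_adj u v"
      unfolding graph_aut_def by auto
    have a12: "petersen_line_adj (\<sigma> x1) (\<sigma> x2)" "petersen_line_adj (\<sigma> x2) (\<sigma> x3)" "petersen_line_adj (\<sigma> x1) (\<sigma> x3)"
      using ad xLV xadj by blast+
    have "\<sigma> x1 \<in> petersen_line_vertices" "\<sigma> x2 \<in> petersen_line_vertices" "\<sigma> x3 \<in> petersen_line_vertices"
      using xLV bij by (meson bij_betwE)+
    moreover have "\<sigma> x1 \<noteq> \<sigma> x2" "\<sigma> x2 \<noteq> \<sigma> x3" "\<sigma> x1 \<noteq> \<sigma> x3" 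
      "\<sigma> x1 \<inter> \<sigma> x2 \<noteq> {}" "\<sigma> x2 \<inter> \<sigma> x3 \<noteq> {}" "\<sigma> x1 \<inter> \<sigma> x3 \<noteq> {}"
      using a12 unfolding ladj by auto
    ultimately have "\<exists>c\<in>petersen_vertices. {\<sigma> x1, \<sigma> x2, \<sigma> x3} = T c" by (intro clique)
    thus ?thesis unfolding Ta by simp
  qed
  define X where "X c = (\<Sum>\<sigma>\<in>S. (if \<sigma> ` Ta = T c then 1 else 0)::nat)" for c
  have eq: "(\<Sum>c\<in>petersen_vertices. kk c b * X c) = 9" if b: "b \<in> petersen_vertices" for b
  proof -
    have finPV: "finite petersen_vertices" by (simp add: PV)
    have A1: "card (\<sigma> ` Ta \<inter> T b) = (\<Sum>e\<in>Ta. \<Sum>f\<in>T b. (if \<sigma> e = f then 1 else 0))" if s: "\<sigma> \<in> S" for \<sigma>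
    proof -
      have inj: "inj_on \<sigma> petersen_line_vertices" using aut s unfolding graph_aut_def bij_betw_def by blast
      have "\<sigma> ` Ta \<inter> T b = \<sigma> ` {e\<in>Ta. \<sigma> e \<in> T b}" by blast
      moreover have "{e\<in>Ta. \<sigma> e \<in> T b} \<subseteq> petersen_line_vertices" using TaLV by blast
      ultimately have "card (\<sigma> ` Ta \<inter> T b) = card {e\<in>Ta. \<sigma> e \<in> T b}"
        using card_image[OF inj_on_subset[OF inj]] by metis
      also have "\<dots> = (\<Sum>e\<in>Ta. if \<sigma> e \<in> T b then 1 else 0)"
        unfolding card_eq_sum sum.inter_filter[OF finite_T[of "{1,2}", folded Ta_def]] ..
      also have "\<dots> = (\<Sum>e\<in>Ta. \<Sum>f\<in>T b. (if \<sigma> e = f then 1 else 0))"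
        by (rule sum.cong) (simp_all add: finite_T)
      finally show ?thesis .
    qed
    have "(\<Sum>\<sigma>\<in>S. card (\<sigma> ` Ta \<inter> T b)) = (\<Sum>\<sigma>\<in>S. \<Sum>e\<in>Ta. \<Sum>f\<in>T b. (if \<sigma> e = f then 1 else 0))"
      by (rule sum.cong) (simp_all add: A1)
    also have "\<dots> = (\<Sum>e\<in>Ta. \<Sum>\<sigma>\<in>S. \<Sum>f\<in>T b. (if \<sigma> e = f then 1 else 0))" by (rule sum.swap)
    also have "\<dots> = (\<Sum>e\<in>Ta. \<Sum>f\<in>T b. \<Sum>\<sigma>\<in>S. (if \<sigma> e = f then 1 else 0))" by (rule sum.cong, simp, rule sum.swap)
    also have "\<dots> = (\<Sum>e\<in>Ta. \<Sum>f\<in>T b. (1::nat))"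
    proof (rule sum.cong, simp, rule sum.cong, simp)
      fix e f assume "e \<in> Ta" "f \<in> T b"
      thus "(\<Sum>\<sigma>\<in>S. (if \<sigma> e = f then 1 else 0)) = (1::nat)" using H TaLV T_sub by blast
    qed
    also have "\<dots> = 9" using T_card[OF b] T_card[OF a_PV] unfolding Ta_def by simp
    finally have L: "(\<Sum>\<sigma>\<in>S. card (\<sigma> ` Ta \<inter> T b)) = 9" .
    have B: "card (\<sigma> ` Ta \<inter> T b) = (\<Sum>c\<in>petersen_vertices. (if \<sigma> ` Ta = T c then kk c b else 0))" if s: "\<sigma> \<in> S" for \<sigma>
    proof -
      from img[OF s] obtain c0 where c0: "c0 \<in> petersen_vertices" "\<sigma> ` Ta = T c0" by blast
      have "(\<Sum>c\<in>petersen_vertices. (if \<sigma> ` Ta = T c then kk c b else 0)) = (\<Sum>c\<in>petersen_vertices. (if c0 = c then kk c b else 0))"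
        using T_inj c0 by (intro sum.cong) auto
      also have "\<dots> = kk c0 b" using c0(1) finPV by simp
      also have "\<dots> = card (\<sigma> ` Ta \<inter> T b)" using card_TT[OF c0(1) b] c0(2) by simp
      finally show ?thesis by simp
    qed
    have "(\<Sum>\<sigma>\<in>S. card (\<sigma> ` Ta \<inter> T b)) = (\<Sum>\<sigma>\<in>S. \<Sum>c\<in>petersen_vertices. (if \<sigma> ` Ta = T c then kk c b else 0))"
      by (rule sum.cong) (simp_all add: B)
    also have "\<dots> = (\<Sum>c\<in>petersen_vertices. \<Sum>\<sigma>\<in>S. (if \<sigma> ` Ta = T c then kk c b else 0))" by (rule sum.swap)
    also have "\<dots> = (\<Sum>c\<in>petersen_vertices. kk c b * X c)"
      unfolding X_def sum_distrib_left by (rule sum.cong, simp, rule sum.cong, simp_all)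
    finally show ?thesis using L by simp
  qed
  have E: "\<forall>b\<in>petersen_vertices. (\<Sum>c\<in>petersen_vertices. kk c b * X c) = 9" using eq by blast
  note E' = E[unfolded PV, simplified kk_def]
  show False using E'
  apply (simp add: doubleton_eq_iff)
  apply (elim conjE)
  apply (subgoal_tac "2 * X {Suc 0, 2} = 3")
   apply (erule two_three)
  apply linarith
  done
qed


theorem mainTheorem8:
  shows "vertex_transitive petersen_line_vertices petersen_line_adj \<and>
         \<not> uniformly_vertex_transitive petersen_line_vertices petersen_line_adj"
  using VT NU by blast

end
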